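(* Let $Y(0),Y(1)$ be real potential outcomes and $X$ a random vector in $\mathbb{R}^{d_X}$ with support $\mathcal{X}=\mathcal{X}_0\cup\mathcal{X}_1$, $\mathcal{X}_0\cap\mathcal{X}_1=\emptyset$, with $D=1\{X\in\mathcal{X}_1\}$ and $Y=DY(1)+(1-D)Y(0)$. Fix $q\in[0,1]$. Suppose that for $d\in\{0,1\}$ the function $x\mapsto Q_{Y(d)|X}(q|x)$ is continuous on $\mathcal{X}$, and that for all $x_1,x_2\in\mathcal{X}$, $$Q_{Y(0)|X}(q|x_1)\leq Q_{Y(0)|X}(q|x_2)\iff Q_{Y(1)|X}(q|x_1)\leq Q_{Y(1)|X}(q|x_2).$$ Let $\mathcal{F}=\mathrm{cl}(\mathrm{int}(\mathcal{X}_1))\cap\mathrm{cl}(\mathrm{int}(\mathcal{X}_0))$. Then for each $d\in\{0,1\}$ there is a unique continuous function $g_{d,q}$ on $\mathcal{X}_d\cup\mathcal{F}$ with $g_{d,q}(x)=Q_{Y|X}(q|x)$ for all $x\in\mathcal{X}_d$. Moreover, if for some $d$ and some $x\in\mathcal{X}_d$ there exists $x^*\in\mathcal{F}$ with $Q_{Y|X}(q|x)=g_{d,q}(x^* )$, then $Q_{Y(1-d)|X}(q|x)=g_{1-d,q}(x^* )$ and $Q_{Y(d)|X}(q|x)=g_{d,q}(x^* )$.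
   Context: $Q_{Y(d)|X}(q|x)$ denotes the $q$-th conditional quantile of $Y(d)$ given $X=x$ (the continuous version); for $x\in\mathcal{X}_d$, $Q_{Y|X}(q|x)$ is understood as $Q_{Y(d)|X}(q|x)$. *)

theory Defs
  imports "HOL-Probability.Probability"
begin

definition support_of :: "'b::metric_space measure \<Rightarrow> 'b set" where
  "support_of N = {x. \<forall>r>0. emeasure N (ball x r) > 0}"

end

theory Submission
  imports Defs
begin

lemma support_closed:
  fixes N :: "'b::metric_space measure"
  assumes "sets N = sets borel"
  shows "closed (support_of N)"
proof -
  have "open (- support_of N)"
    unfolding open_contains_ball
  proof
    fix x assume "x \<in> - support_of N"
    then obtain r where r: "r > 0" "emeasure N (ball x r) = 0"
      unfolding support_of_def by (auto simp: not_less)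
    have "ball x r \<subseteq> - support_of N"
    proof
      fix y assume y: "y \<in> ball x r"
      define s where "s = r - dist x y"
      have s: "s > 0" using y by (simp add: s_def)
      have sub: "ball y s \<subseteq> ball x r"
        by (auto simp: s_def intro: ball_subset_ball_iff[THEN iffD2]) (metis dist_commute dist_triangle order_le_less_trans add.commute less_diff_eq)
      have "emeasure N (ball y s) \<le> emeasure N (ball x r)"
        by (rule emeasure_mono[OF sub]) (simp add: assms)
      then have "emeasure N (ball y s) = 0" using r by simp
      then show "y \<in> - support_of N" using s unfolding support_of_def by auto
    qed
    then show "\<exists>e>0. ball x e \<subseteq> - support_of N" using r by blast
  qed
  then show ?thesis by (simp add: closed_def)
qed

lemma cont_agree:
  fixes h g :: "'b::metric_space \<Rightarrow> real"
  assumes "continuous_on T h" "continuous_on T g" "A \<subseteq> T" "T \<subseteq> closure A"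
    "\<forall>x\<in>A. h x = g x" "x \<in> T"
  shows "h x = g x"
proof -
  obtain a where a: "\<forall>n. a n \<in> A" "a \<longlonglongrightarrow> x"
    using assms(4,6) closure_sequential by blast
  have aT: "\<forall>n. a n \<in> T" using a assms(3) by blast
  have "(\<lambda>n. h (a n)) \<longlonglongrightarrow> h x"
    using assms(1,6) aT a(2) continuous_on_sequentially[of T h] by (auto simp: o_def)
  moreover have "(\<lambda>n. g (a n)) \<longlonglongrightarrow> g x"
    using assms(2,6) aT a(2) continuous_on_sequentially[of T g] by (auto simp: o_def)
  moreover have "(\<lambda>n. h (a n)) = (\<lambda>n. g (a n))" using a assms(5) by auto
  ultimately show ?thesis using LIMSEQ_unique by metis
qed

theorem theoremB1:
  fixes M :: "'a measure"
    and X :: "'a \<Rightarrow> real ^ 'n"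
    and Y :: "nat \<Rightarrow> 'a \<Rightarrow> real"
    and XX :: "nat \<Rightarrow> (real ^ 'n) set"
    and Q :: "nat \<Rightarrow> real \<Rightarrow> real ^ 'n \<Rightarrow> real"
    and q :: real
  assumes "prob_space M"
    and "X \<in> borel_measurable M"
    and "\<forall>d\<in>{0,1}. Y d \<in> borel_measurable M"
    and "support_of (distr M borel X) = XX 0 \<union> XX 1"
    and "XX 0 \<inter> XX 1 = {}"
    and "q \<in> {0..1}"
    and "\<forall>d\<in>{0::nat,1}. continuous_on (XX 0 \<union> XX 1) (Q d q)"
    and "\<forall>x1\<in>XX 0 \<union> XX 1. \<forall>x2\<in>XX 0 \<union> XX 1.
           (Q 0 q x1 \<le> Q 0 q x2 \<longleftrightarrow> Q 1 q x1 \<le> Q 1 q x2)"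
  shows "(\<forall>d\<in>{0::nat,1}. \<exists>g.
            continuous_on (XX d \<union> (closure (interior (XX 1)) \<inter> closure (interior (XX 0)))) g
          \<and> (\<forall>x\<in>XX d. g x = Q d q x)
          \<and> (\<forall>h. continuous_on (XX d \<union> (closure (interior (XX 1)) \<inter> closure (interior (XX 0)))) h
                 \<and> (\<forall>x\<in>XX d. h x = Q d q x)
                 \<longrightarrow> (\<forall>x\<in>XX d \<union> (closure (interior (XX 1)) \<inter> closure (interior (XX 0))). h x = g x)))
       \<and> (\<forall>g :: nat \<Rightarrow> real ^ 'n \<Rightarrow> real.
            (\<forall>d\<in>{0::nat,1}.
               continuous_on (XX d \<union> (closure (interior (XX 1)) \<inter> closure (interior (XX 0)))) (g d)
             \<and> (\<forall>x\<in>XX d. g d x = Q d q x))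
          \<longrightarrow> (\<forall>d\<in>{0::nat,1}. \<forall>x\<in>XX d.
                 \<forall>xs\<in>closure (interior (XX 1)) \<inter> closure (interior (XX 0)).
                   Q d q x = g d xs \<longrightarrow> Q (1 - d) q x = g (1 - d) xs \<and> Q d q x = g d xs))"
proof -
  define S where "S = XX 0 \<union> XX 1"
  define F where "F = closure (interior (XX 1)) \<inter> closure (interior (XX 0))"
  have clS: "closed S" unfolding S_def using assms(4) support_closed[of "distr M borel X"] by simp
  have F0: "F \<subseteq> closure (XX 0)" unfolding F_def using closure_mono[OF interior_subset] by blast
  have F1: "F \<subseteq> closure (XX 1)" unfolding F_def using closure_mono[OF interior_subset] by blast
  have FS: "F \<subseteq> S" using F0 clS closure_minimal[of "XX 0" S] unfolding S_def by blast
  have Fd: "F \<subseteq> closure (XX d)" if "d \<in> {0::nat,1}" for d using that F0 F1 by auto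
  have TS: "XX d \<union> F \<subseteq> S" if "d \<in> {0::nat,1}" for d using that FS unfolding S_def by auto
  have contQ: "continuous_on (XX d \<union> F) (Q d' q)" if "d \<in> {0::nat,1}" "d' \<in> {0::nat,1}" for d d'
    using continuous_on_subset[OF assms(7)[rule_format, OF that(2)] TS[OF that(1), unfolded S_def]] .
  have uniq: "h x = Q d q x" if "d \<in> {0::nat,1}" "continuous_on (XX d \<union> F) h"
    "\<forall>x\<in>XX d. h x = Q d q x" "x \<in> XX d \<union> F" for d h x
  proof (rule cont_agree[OF that(2) contQ[OF that(1) that(1)], of "XX d" x])
    show "XX d \<subseteq> XX d \<union> F" by simp
    show "XX d \<union> F \<subseteq> closure (XX d)" using Fd[OF that(1)] closure_subset by simp
  qed (use that in auto)
  have part1: "\<forall>d\<in>{0::nat,1}. \<exists>g. continuous_on (XX d \<union> F) g \<and> (\<forall>x\<in>XX d. g x = Q d q x)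
          \<and> (\<forall>h. continuous_on (XX d \<union> F) h \<and> (\<forall>x\<in>XX d. h x = Q d q x)
                 \<longrightarrow> (\<forall>x\<in>XX d \<union> F. h x = g x))"
  proof
    fix d :: nat assume d: "d \<in> {0,1}"
    show "\<exists>g. continuous_on (XX d \<union> F) g \<and> (\<forall>x\<in>XX d. g x = Q d q x)
          \<and> (\<forall>h. continuous_on (XX d \<union> F) h \<and> (\<forall>x\<in>XX d. h x = Q d q x)
                 \<longrightarrow> (\<forall>x\<in>XX d \<union> F. h x = g x))"
    proof (intro exI conjI allI impI ballI)
      show "continuous_on (XX d \<union> F) (Q d q)" using contQ[OF d d] .
    next
      fix h x assume "continuous_on (XX d \<union> F) h \<and> (\<forall>x\<in>XX d. h x = Q d q x)" "x \<in> XX d \<union> F"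
      then show "h x = Q d q x" using uniq[OF d] by blast
    qed simp
  qed
  have part2: "\<forall>g :: nat \<Rightarrow> real ^ 'n \<Rightarrow> real.
            (\<forall>d\<in>{0::nat,1}. continuous_on (XX d \<union> F) (g d) \<and> (\<forall>x\<in>XX d. g d x = Q d q x))
          \<longrightarrow> (\<forall>d\<in>{0::nat,1}. \<forall>x\<in>XX d. \<forall>xs\<in>F.
                   Q d q x = g d xs \<longrightarrow> Q (1 - d) q x = g (1 - d) xs \<and> Q d q x = g d xs)"
  proof (intro allI impI ballI)
    fix g :: "nat \<Rightarrow> real ^ 'n \<Rightarrow> real" and d x xs
    assume H: "\<forall>d\<in>{0::nat,1}. continuous_on (XX d \<union> F) (g d) \<and> (\<forall>x\<in>XX d. g d x = Q d q x)"
      and d: "d \<in> {0::nat,1}" and x: "x \<in> XX d" and xs: "xs \<in> F" and eq: "Q d q x = g d xs"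
    have d': "1 - d \<in> {0::nat,1}" using d by auto
    have g1: "g d xs = Q d q xs" using uniq[OF d, of "g d" xs] H[rule_format, OF d] xs by simp
    have g2: "g (1-d) xs = Q (1-d) q xs" using uniq[OF d', of "g (1-d)" xs] H[rule_format, OF d'] xs by simp
    have xS: "x \<in> S" "xs \<in> S" using x d xs FS unfolding S_def by auto
    have "Q d q x = Q d q xs" using eq g1 by simp
    then have "Q (1-d) q x = Q (1-d) q xs"
    proof -
      have A: "Q 0 q x \<le> Q 0 q xs \<longleftrightarrow> Q 1 q x \<le> Q 1 q xs"
        using assms(8) xS unfolding S_def by blast
      have B: "Q 0 q xs \<le> Q 0 q x \<longleftrightarrow> Q 1 q xs \<le> Q 1 q x"
        using assms(8) xS unfolding S_def by blast
      have "d = 0 \<or> d = 1" using d by auto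
      then show ?thesis
      proof
        assume "d = 0" then show ?thesis using A B \<open>Q d q x = Q d q xs\<close> by simp
      next
        assume "d = 1" then show ?thesis using A B \<open>Q d q x = Q d q xs\<close> by simp
      qed
    qed
    then show "Q (1 - d) q x = g (1 - d) xs \<and> Q d q x = g d xs" using g2 eq by simp
  qed
  show ?thesis using part1 part2 unfolding F_def by (rule conjI)
qed

end
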